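(* Consider a Markov process with state space $\mathcal{S}\subseteq\mathbb{R}^{d_{\mathcal{S}}}$ consisting of state variables $s^1,\dots,s^{d_{\mathcal{S}}}$ (one per coordinate) and action space $\mathcal{A}\subseteq\mathbb{R}^{d_{\mathcal{A}}}$, whose data-generating process over time is described by a causal graphical model (a directed acyclic graph $\mathcal{G}$ over the time-indexed variables $s^k_t$, $a_t$, possibly together with unobserved variables, with joint distribution factorizing as $\prod_i p(x^i\mid \mathrm{PA}_i)$ over the parents in $\mathcal{G}$). Assume: (A1) the joint distribution and $\mathcal{G}$ satisfy the causal Markov condition and causal faithfulness; (A2) the state is fully observable and the dynamics is Markovian, i.e. $s_{t-1}\perp\!\!\!\perp s_{t+1}\mid s_t$ (together with the action), and the transition is given by $\mathcal{P}(s_{t+1}\mid s_t,a_t)$; (A3) for every state variable $s^i$, the edge $s^i_t\to s^i_{t+1}$ is present in $\mathcal{G}$; (A4) there are no simultaneous or backward edges in time: for all $i,j$, $s^i_t\not\to s^j_t$ and $s^i_t\not\to s^j_{t-1}$; (A5) the transitions of the state variables are independent: $\mathcal{P}(s_{t+1}\mid s_t,a_t)=\prod_{j=1}^{d_{\mathcal{S}}} p(s^j_{t+1}\mid s_t,a_t)$. For an index $i$, let $\{a_t, s_t\setminus s^i_t\}=\{a_t,s^1_t,\dots,s^{i-1}_t,s^{i+1}_t,\dots,s^{d_{\mathcal{S}}}_t\}$. Then for any indices $i,j\in\{1,\dots,d_{\mathcal{S}}\}$: if $s^i_t$ and $s^j_{t+1}$ are conditionally dependent given $\{a_t, s_t\setminus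 s^i_t\}$, then the edge $s^i_t\to s^j_{t+1}$ exists in $\mathcal{G}$. Similarly, if $a_t$ and $s^j_{t+1}$ are conditionally dependent given $s_t$, then the edge $a_t\to s^j_{t+1}$ exists in $\mathcal{G}$.
   Context: A causal graphical model consists of a DAG $\mathcal{G}=(V,E)$ and a distribution $p$ over random variables indexed by $V$, where an edge $X^i\to X^j$ means $X^i$ is a direct cause of $X^j$, and $p(x^1,\dots,x^d)=\prod_i p(x^i\mid \mathrm{PA}_i)$ with $\mathrm{PA}_i$ the parents of node $i$. d-separation: a path $I_1,\dots,I_m$ is blocked by a set $S$ (not containing $I_1,I_m$) if some intermediate node $I_k$ either (i) lies in $S$ and is a chain or fork node ($I_{k-1}\to I_k\to I_{k+1}$, $I_{k-1}\leftarrow I_k\leftarrow I_{k+1}$, or $I_{k-1}\leftarrow I_k\to I_{k+1}$), or (ii) is a collider $I_{k-1}\to I_k\leftarrow I_{k+1}$ such that neither $I_k$ nor any descendant is in $S$; $A$ and $B$ are d-separated by $C$ if every path between them is blocked by $C$. The (global) causal Markov condition: for all disjoint vertex sets $A,B,C$, d-separation of $A$ and $B$ by $C$ in $\mathcal{G}$ implies $A\perp\!\!\!\perp B\mid C$ under $p$. Causal faithfulness: $p$ has no conditional independence relations other than those entailed by the Markov property (i.e. conditional independence implies d-separation). In this setting the action $a_t$ has no parents in $\mathcal{G}$. *)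

theory Defs
  imports "HOL-Probability.Probability"
begin

text \<open>Time-indexed variables of the process: state variable s^k_t is St t k
  (k in 1..dS), the action a_t is Act t.  Time ranges over the integers.\<close>
datatype vertex = St int nat | Act int

definition vars :: "nat \<Rightarrow> vertex set" where
  "vars dS = {St t k | t k. k \<in> {1..dS}} \<union> range Act"

definition state_at :: "nat \<Rightarrow> int \<Rightarrow> vertex set" where
  "state_at dS t = {St t k | k. k \<in> {1..dS}}"

definition adjacent :: "(vertex \<times> vertex) set \<Rightarrow> vertex \<Rightarrow> vertex \<Rightarrow> bool" where
  "adjacent E x y \<longleftrightarrow> (x, y) \<in> E \<or> (y, x) \<in> E"

definition is_path :: "(vertex \<times> vertex) set \<Rightarrow> vertex list \<Rightarrow> bool" where
  "is_path E p \<longleftrightarrow> 2 \<le> length p \<and> distinct p \<and>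
     (\<forall>k. Suc k < length p \<longrightarrow> adjacent E (p ! k) (p ! Suc k))"

definition collider :: "(vertex \<times> vertex) set \<Rightarrow> vertex list \<Rightarrow> nat \<Rightarrow> bool" where
  "collider E p k \<longleftrightarrow> (p ! (k - 1), p ! k) \<in> E \<and> (p ! (k + 1), p ! k) \<in> E"

definition blocked :: "(vertex \<times> vertex) set \<Rightarrow> vertex set \<Rightarrow> vertex list \<Rightarrow> bool" where
  "blocked E C p \<longleftrightarrow> (\<exists>k. 0 < k \<and> k + 1 < length p \<and>
     ((p ! k \<in> C \<and> \<not> collider E p k) \<or>
      (collider E p k \<and> (\<forall>d. (p ! k, d) \<in> E\<^sup>* \<longrightarrow> d \<notin> C))))"

definition d_separated :: "(vertex \<times> vertex) set \<Rightarrow> vertex set \<Rightarrow> vertex set \<Rightarrow> vertex set \<Rightarrow> bool" where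
  "d_separated E A B C \<longleftrightarrow>
     (\<forall>p. is_path E p \<and> hd p \<in> A \<and> last p \<in> B \<longrightarrow> blocked E C p)"

definition var_events :: "'w measure \<Rightarrow> (int \<Rightarrow> nat \<Rightarrow> 'w \<Rightarrow> real) \<Rightarrow> (int \<Rightarrow> 'w \<Rightarrow> real^'n)
    \<Rightarrow> vertex \<Rightarrow> 'w set set" where
  "var_events M XS XA v = (case v of
      St t k \<Rightarrow> {XS t k -` B \<inter> space M | B. B \<in> sets borel}
    | Act t \<Rightarrow> {XA t -` B \<inter> space M | B. B \<in> sets borel})"

definition gen_events :: "'w measure \<Rightarrow> (int \<Rightarrow> nat \<Rightarrow> 'w \<Rightarrow> real) \<Rightarrow> (int \<Rightarrow> 'w \<Rightarrow> real^'n)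
    \<Rightarrow> vertex set \<Rightarrow> 'w set set" where
  "gen_events M XS XA A = (\<Union>v\<in>A. var_events M XS XA v)"

definition cond_indep :: "'w measure \<Rightarrow> (int \<Rightarrow> nat \<Rightarrow> 'w \<Rightarrow> real) \<Rightarrow> (int \<Rightarrow> 'w \<Rightarrow> real^'n)
    \<Rightarrow> vertex set \<Rightarrow> vertex set \<Rightarrow> vertex set \<Rightarrow> bool" where
  "cond_indep M XS XA A B C \<longleftrightarrow>
    (let F = sigma (space M) (gen_events M XS XA C) in
     \<forall>P \<in> sigma_sets (space M) (gen_events M XS XA A).
     \<forall>Q \<in> sigma_sets (space M) (gen_events M XS XA B).
       AE \<omega> in M. real_cond_exp M F (indicator (P \<inter> Q)) \<omega> =
                   real_cond_exp M F (indicator P) \<omega> * real_cond_exp M F (indicator Q) \<omega>)"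

end

theory Submission
  imports Defs
begin

lemma vars_St[simp]: "St a m \<in> vars dS \<longleftrightarrow> m \<in> {1..dS}"
  by (auto simp: vars_def)

lemma vars_Act[simp]: "Act a \<in> vars dS"
  by (auto simp: vars_def)

lemma state_at_mem: "x \<in> state_at dS t \<longleftrightarrow> (\<exists>k. x = St t k \<and> k \<in> {1..dS})"
  by (auto simp: state_at_def)

lemma unblock:
  assumes "\<forall>k. 0 < k \<and> k + 1 < length p \<longrightarrow> p ! k \<notin> C \<and> \<not> collider E p k"
  shows "\<not> blocked E C p"
  using assms unfolding blocked_def by blast

locale G =
  fixes E :: "(vertex \<times> vertex) set" and dS :: nat
  assumes graph: "E \<subseteq> vars dS \<times> vars dS"
    and nopar: "\<forall>t v. (v, Act t) \<notin> E"
    and A3: "\<forall>t i. i \<in> {1..dS} \<longrightarrow> (St t i, St (t + 1) i) \<in> E"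
    and A4: "\<forall>t t' i j. t' \<le> t \<longrightarrow> (St t i, St t' j) \<notin> E"
    and dsep2: "\<forall>t. d_separated E (state_at dS (t - 1)) (state_at dS (t + 1)) (state_at dS t \<union> {Act t})"
begin

lemma edge_vars: "(u, v) \<in> E \<Longrightarrow> u \<in> vars dS \<and> v \<in> vars dS"
  using graph by auto

lemma edge_St: assumes "(St a m, v) \<in> E" shows "\<exists>b k. v = St b k \<and> a < b \<and> k \<in> {1..dS}"
proof (cases v)
  case (St b k)
  then show ?thesis using assms A4 edge_vars[OF assms] by (auto simp: not_le[symmetric])
next
  case (Act x2)
  then show ?thesis using assms nopar by auto
qed

lemma edge_target_St: assumes "(u, v) \<in> E" shows "\<exists>b k. v = St b k \<and> k \<in> {1..dS}"
proof (cases v)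
  case (St b k)
  then show ?thesis using edge_vars[OF assms] by auto
next
  case (Act x2)
  then show ?thesis using assms nopar by auto
qed

lemma rt_St: assumes "(u, v) \<in> E\<^sup>*" "u = St a m" shows "\<exists>b k. v = St b k \<and> a \<le> b"
  using assms
proof (induction rule: rtrancl_induct)
  case base
  then show ?case by auto
next
  case (step y z)
  then obtain b k where "y = St b k" "a \<le> b" by auto
  with step edge_St[of b k z] show ?case by fastforce
qed

definition inL :: "int \<Rightarrow> vertex \<Rightarrow> bool" where
  "inL t v \<longleftrightarrow> (\<exists>a m. v = St a m \<and> t < a)"

lemma inL_rt: "inL t u \<Longrightarrow> (u, v) \<in> E\<^sup>* \<Longrightarrow> inL t v"
  unfolding inL_def using rt_St by fastforce

lemma inL_edge: "inL t u \<Longrightarrow> (u, v) \<in> E \<Longrightarrow> inL t v"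
  using inL_rt by blast

lemma LB:
  assumes nb: "\<not> blocked E C p" and pth: "is_path E p"
    and noL: "\<forall>c\<in>C. \<not> inL t c"
  shows "k + 1 < length p \<Longrightarrow> (p ! Suc k, p ! k) \<in> E \<Longrightarrow> inL t (p ! k) \<Longrightarrow> inL t (p ! 0)"
proof (induction k)
  case 0
  then show ?case by simp
next
  case (Suc k)
  have coll: "\<not> collider E p (Suc k)"
  proof
    assume c: "collider E p (Suc k)"
    with nb Suc.prems have "\<exists>d. (p ! Suc k, d) \<in> E\<^sup>* \<and> d \<in> C"
      unfolding blocked_def by (metis add_Suc_shift zero_less_Suc)
    then show False using inL_rt[OF Suc.prems(3)] noL by blast
  qed
  have adj: "adjacent E (p ! k) (p ! Suc k)" using pth Suc.prems(1) unfolding is_path_def by auto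
  have e: "(p ! Suc k, p ! k) \<in> E"
    using coll adj Suc.prems(2) unfolding collider_def adjacent_def by auto
  show ?case
    by (rule Suc.IH) (use Suc.prems e inL_edge in auto)
qed

lemma chain_nth:
  assumes "k < N"
  shows "(map (\<lambda>u. St (t - 1 - int u) m) [0..<N] @ tl') ! k = St (t - 1 - int k) m"
  using assms by (simp add: nth_append)

lemma L1:
  assumes a: "a \<le> t - 1" and e: "(St a m, St (t + 1) j) \<in> E"
  shows False
proof -
  have m: "m \<in> {1..dS}" and j: "j \<in> {1..dS}" using edge_vars[OF e] by auto
  define N where "N = nat (t - a)"
  have N1: "1 \<le> N" and Na: "int N = t - a" using a by (auto simp: N_def)
  define p where "p = map (\<lambda>u. St (t - 1 - int u) m) [0..<N] @ [St (t + 1) j]"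
  have len: "length p = Suc N" by (simp add: p_def)
  have pk: "k < N \<Longrightarrow> p ! k = St (t - 1 - int k) m" for k
    unfolding p_def by (rule chain_nth)
  have pN: "p ! N = St (t + 1) j" by (simp add: p_def nth_append)
  have pth: "is_path E p"
    unfolding is_path_def
  proof (intro conjI allI impI)
    show "2 \<le> length p" using len N1 by simp
    show "distinct p" unfolding p_def by (auto simp: distinct_map inj_on_def)
  next
    fix k assume k: "Suc k < length p"
    show "adjacent E (p ! k) (p ! Suc k)"
    proof (cases "Suc k < N")
      case True
      have "(St (t - 2 - int k) m, St (t - 2 - int k + 1) m) \<in> E" using A3 m by blast
      moreover have "t - 2 - int k + 1 = t - 1 - int k" by simp
      moreover have "t - 1 - int (Suc k) = t - 2 - int k" by simp
      ultimately have ed: "(St (t - 2 - int k) m, St (t - 1 - int k) m) \<in> E" by simp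
      have ps: "p ! Suc k = St (t - 2 - int k) m" using pk[of "Suc k"] True
        by (metis \<open>t - 1 - int (Suc k) = t - 2 - int k\<close>)
      show ?thesis using pk[of k] True ps ed unfolding adjacent_def by simp
    next
      case False
      then have "Suc k = N" using k len by simp
      moreover then have "t - 1 - int k = a" using Na by simp
      ultimately show ?thesis using pk[of k] pN e unfolding adjacent_def by auto
    qed
  qed
  have hd: "hd p \<in> state_at dS (t - 1)"
  proof -
    have "hd p = p ! 0" using len by (metis hd_conv_nth list.size(3) nat.distinct(1))
    also have "\<dots> = St (t - 1) m" using pk[of 0] N1 by simp
    finally show ?thesis using m by (auto simp: state_at_mem)
  qed
  have lst: "last p \<in> state_at dS (t + 1)"
    using j by (auto simp: p_def state_at_mem)
  have nb: "\<not> blocked E (state_at dS t \<union> {Act t}) p"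
  proof (rule unblock, intro allI impI conjI)
    fix k assume k: "0 < k \<and> k + 1 < length p"
    then have kN: "k < N" using len by simp
    show "p ! k \<notin> state_at dS t \<union> {Act t}"
      using pk[OF kN] k by (auto simp: state_at_mem)
    have "(St (t - 1 - int (k - 1)) m, St (t - 1 - int k) m) \<notin> E"
      using A4 k by auto
    then show "\<not> collider E p k"
      using pk[OF kN] pk[of "k - 1"] kN unfolding collider_def by auto
  qed
  show False using dsep2 pth hd lst nb unfolding d_separated_def by blast
qed

lemma L2a:
  assumes a: "a \<le> t - 1" and T: "T \<noteq> t" and e: "(Act T, St a m) \<in> E"
    and e2: "(Act T, St (t + 1) j) \<in> E"
  shows False
proof -
  have m: "m \<in> {1..dS}" and j: "j \<in> {1..dS}" using edge_vars[OF e] edge_vars[OF e2] by auto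
  define N where "N = nat (t - a)"
  have N1: "1 \<le> N" and Na: "int N = t - a" using a by (auto simp: N_def)
  define p where "p = map (\<lambda>u. St (t - 1 - int u) m) [0..<N] @ [Act T, St (t + 1) j]"
  have len: "length p = Suc (Suc N)" by (simp add: p_def)
  have pk: "k < N \<Longrightarrow> p ! k = St (t - 1 - int k) m" for k
    unfolding p_def by (rule chain_nth)
  have pN: "p ! N = Act T" by (simp add: p_def nth_append)
  have pN1: "p ! Suc N = St (t + 1) j" by (simp add: p_def nth_append)
  have pth: "is_path E p"
    unfolding is_path_def
  proof (intro conjI allI impI)
    show "2 \<le> length p" using len N1 by simp
    show "distinct p" unfolding p_def by (auto simp: distinct_map inj_on_def)
  next
    fix k assume k: "Suc k < length p"
    show "adjacent E (p ! k) (p ! Suc k)"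
    proof (cases "Suc k < N")
      case True
      have "(St (t - 2 - int k) m, St (t - 2 - int k + 1) m) \<in> E" using A3 m by blast
      moreover have "t - 2 - int k + 1 = t - 1 - int k" by simp
      moreover have "t - 1 - int (Suc k) = t - 2 - int k" by simp
      ultimately have ed: "(St (t - 2 - int k) m, St (t - 1 - int k) m) \<in> E" by simp
      have ps: "p ! Suc k = St (t - 2 - int k) m" using pk[of "Suc k"] True
        by (metis \<open>t - 1 - int (Suc k) = t - 2 - int k\<close>)
      show ?thesis using pk[of k] True ps ed unfolding adjacent_def by simp
    next
      case False
      then consider "Suc k = N" | "k = N" using k len by linarith
      then show ?thesis
      proof cases
        case 1
        moreover then have "t - 1 - int k = a" using Na by simp
        ultimately show ?thesis using pk[of k] pN e unfolding adjacent_def by auto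
      next
        case 2
        then show ?thesis using pN pN1 e2 unfolding adjacent_def by auto
      qed
    qed
  qed
  have hd: "hd p \<in> state_at dS (t - 1)"
  proof -
    have "hd p = p ! 0" using len by (metis hd_conv_nth list.size(3) nat.distinct(1))
    also have "\<dots> = St (t - 1) m" using pk[of 0] N1 by simp
    finally show ?thesis using m by (auto simp: state_at_mem)
  qed
  have lst: "last p \<in> state_at dS (t + 1)"
    using j by (auto simp: p_def state_at_mem)
  have nb: "\<not> blocked E (state_at dS t \<union> {Act t}) p"
  proof (rule unblock, intro allI impI conjI)
    fix k assume k: "0 < k \<and> k + 1 < length p"
    show "p ! k \<notin> state_at dS t \<union> {Act t}"
    proof (cases "k < N")
      case True
      then show ?thesis using pk k by (auto simp: state_at_mem)
    next
      case False
      then have "k = N" using k len by simp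
      then show ?thesis using pN T by (auto simp: state_at_mem)
    qed
    show "\<not> collider E p k"
    proof (cases "k < N")
      case kN: True
      have "(St (t - 1 - int (k - 1)) m, St (t - 1 - int k) m) \<notin> E"
        using A4 k by auto
      then show ?thesis
        using pk[OF kN] pk[of "k - 1"] kN unfolding collider_def by auto
    next
      case False
      then have "k = N" using k len by simp
      then show ?thesis using pN pN1 nopar unfolding collider_def by auto
    qed
  qed
  show False using dsep2 pth hd lst nb unfolding d_separated_def by blast
qed

lemma L2b:
  assumes T: "T \<noteq> t" and e: "(Act T, St t m) \<in> E"
    and e2: "(Act T, St (t + 1) j) \<in> E"
  shows False
proof -
  have m: "m \<in> {1..dS}" and j: "j \<in> {1..dS}" using edge_vars[OF e] edge_vars[OF e2] by auto
  define p where "p = [St (t - 1) m, St t m, Act T, St (t + 1) j]"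
  have e0: "(St (t - 1) m, St t m) \<in> E" using A3 m by (metis diff_add_cancel)
  have pth: "is_path E p"
    unfolding is_path_def
  proof (intro conjI allI impI)
    show "2 \<le> length p" by (simp add: p_def)
    show "distinct p" by (simp add: p_def)
  next
    fix k assume k: "Suc k < length p"
    then have "k < 3" by (simp add: p_def)
    then have "k = 0 \<or> k = 1 \<or> k = 2" by linarith
    then show "adjacent E (p ! k) (p ! Suc k)"
      using e0 e e2 by (auto simp: p_def adjacent_def)
  qed
  have hd: "hd p \<in> state_at dS (t - 1)"
    using m by (auto simp: p_def state_at_mem)
  have lst: "last p \<in> state_at dS (t + 1)"
    using j by (auto simp: p_def state_at_mem)
  have nb: "\<not> blocked E (state_at dS t \<union> {Act t}) p"
  proof
    assume "blocked E (state_at dS t \<union> {Act t}) p"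
    then obtain k where k: "0 < k" "k + 1 < length p" and
      b: "(p ! k \<in> state_at dS t \<union> {Act t} \<and> \<not> collider E p k) \<or>
      (collider E p k \<and> (\<forall>d. (p ! k, d) \<in> E\<^sup>* \<longrightarrow> d \<notin> state_at dS t \<union> {Act t}))"
      unfolding blocked_def by blast
    then have "k < 3" by (simp add: p_def)
    with k have "k = 1 \<or> k = 2" by linarith
    then show False
    proof
      assume k1: "k = 1"
      have "collider E p k" using k1 e0 e by (simp add: p_def collider_def)
      moreover have "St t m \<in> state_at dS t" using m by (simp add: state_at_mem)
      ultimately show False using b k1 by (auto simp: p_def)
    next
      assume k2: "k = 2"
      have "\<not> collider E p k" using k2 nopar by (simp add: p_def collider_def)
      then show False using b k2 T by (auto simp: p_def state_at_mem)
    qed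
  qed
  show False using dsep2 pth hd lst nb unfolding d_separated_def by blast
qed

lemma main_core:
  assumes pth: "is_path E p" and nb: "\<not> blocked E C p"
    and noL: "\<forall>c\<in>C. \<not> inL t c" and X0: "\<not> inL t (p ! 0)"
    and pl: "last p = St (t + 1) j"
    and ActC: "Act t \<in> C \<or> p ! 0 = Act t"
    and stC: "\<And>m. m \<in> {1..dS} \<Longrightarrow> St t m \<notin> C \<Longrightarrow> St t m = p ! 0"
  shows "length p = 2 \<and> (p ! 0, St (t + 1) j) \<in> E"
proof -
  define n where "n = length p"
  have n2: "2 \<le> n" and dist: "distinct p" using pth by (auto simp: is_path_def n_def)
  have pl': "p ! (n - 1) = St (t + 1) j" using pl n2
    using last_conv_nth[of p] n_def by fastforce
  have s2: "Suc (n - 2) = n - 1" using n2 by simp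
  have adjZ: "adjacent E (p ! (n - 2)) (p ! (n - 1))"
  proof -
    have "Suc (n - 2) < length p" using n2 n_def by simp
    then have "adjacent E (p ! (n - 2)) (p ! Suc (n - 2))" using pth unfolding is_path_def by blast
    then show ?thesis using s2 by simp
  qed
  have nYZ: "(p ! (n - 1), p ! (n - 2)) \<notin> E"
  proof
    assume e: "(p ! (n - 1), p ! (n - 2)) \<in> E"
    have "inL t (p ! (n - 2))" using inL_edge[OF _ e] pl' by (auto simp: inL_def)
    then have "inL t (p ! 0)" using LB[OF nb pth noL, of "n - 2"] e n2 s2 n_def by auto
    then show False using X0 by simp
  qed
  then have eZ: "(p ! (n - 2), p ! (n - 1)) \<in> E" using adjZ unfolding adjacent_def by auto
  show ?thesis
  proof (cases "n = 2")
    case True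
    then show ?thesis using eZ pl' n_def by simp
  next
    case False
    then have n3: "3 \<le> n" using n2 by simp
    have s3: "Suc (n - 3) = n - 2" using n3 by simp
    have Znc: "\<not> collider E p (n - 2)"
      using nYZ s2 unfolding collider_def by (metis Suc_eq_plus1)
    have ZC: "p ! (n - 2) \<notin> C"
    proof
      assume "p ! (n - 2) \<in> C"
      moreover have "0 < n - 2" "n - 2 + 1 < length p" using n3 n_def by auto
      ultimately have "blocked E C p" using Znc unfolding blocked_def by blast
      then show False using nb by simp
    qed
    have Zne0: "p ! (n - 2) \<noteq> p ! 0" using dist n3 n_def nth_eq_iff_index_eq[of p "n - 2" 0] by fastforce
    show ?thesis
    proof (cases "p ! (n - 2)")
      case (St a m)
      have e: "(St a m, St (t + 1) j) \<in> E" using eZ St pl' by simp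
      have m: "m \<in> {1..dS}" using edge_vars[OF e] by simp
      have "a < t + 1" using A4 e by (meson not_le)
      moreover have "a \<noteq> t" using stC[OF m] ZC Zne0 St by auto
      ultimately have "a \<le> t - 1" by simp
      then show ?thesis using L1 e by blast
    next
      case (Act T)
      have T: "T \<noteq> t" using ActC ZC Act Zne0 by auto
      have adjW: "adjacent E (p ! (n - 3)) (p ! (n - 2))"
      proof -
        have "Suc (n - 3) < length p" using n3 n_def by simp
        then have "adjacent E (p ! (n - 3)) (p ! Suc (n - 3))" using pth unfolding is_path_def by blast
        then show ?thesis using s3 by simp
      qed
      then have eW: "(p ! (n - 2), p ! (n - 3)) \<in> E" using nopar Act unfolding adjacent_def by auto
      obtain a m where W: "p ! (n - 3) = St a m" using edge_target_St[OF eW] by blast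
      have e1: "(Act T, St a m) \<in> E" using eW W Act by simp
      have e2: "(Act T, St (t + 1) j) \<in> E" using eZ Act pl' by simp
      show ?thesis
      proof (cases "t < a")
        case True
        then have "inL t (p ! (n - 3))" using W by (simp add: inL_def)
        then have "inL t (p ! 0)" using LB[OF nb pth noL, of "n - 3"] eW n3 s3 n_def by auto
        then show ?thesis using X0 by simp
      next
        case False
        then consider "a = t" | "a \<le> t - 1" by linarith
        then show ?thesis
        proof cases
          case 1 then show ?thesis using L2b[OF T] e1 e2 by blast
        next
          case 2 then show ?thesis using L2a[OF 2 T e1 e2] by blast
        qed
      qed
    qed
  qed
qed

end
theorem theorem1:
  fixes M :: "'w measure"
    and XS :: "int \<Rightarrow> nat \<Rightarrow> 'w \<Rightarrow> real"
    and XA :: "int \<Rightarrow> 'w \<Rightarrow> real^'n"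
    and dS :: nat
    and E :: "(vertex \<times> vertex) set"
  assumes prob: "prob_space M"
    and meas_S: "\<forall>t k. XS t k \<in> borel_measurable M"
    and meas_A: "\<forall>t. XA t \<in> borel_measurable M"
    and graph: "E \<subseteq> vars dS \<times> vars dS"
    and dag: "acyclic E"
    and act_no_parents: "\<forall>t v. (v, Act t) \<notin> E"
    and markov: "\<forall>A B C. A \<subseteq> vars dS \<and> B \<subseteq> vars dS \<and> C \<subseteq> vars dS \<and>
                   A \<inter> B = {} \<and> A \<inter> C = {} \<and> B \<inter> C = {} \<longrightarrow>
                   d_separated E A B C \<longrightarrow> cond_indep M XS XA A B C"
    and faithful: "\<forall>A B C. A \<subseteq> vars dS \<and> B \<subseteq> vars dS \<and> C \<subseteq> vars dS \<and>
                   A \<inter> B = {} \<and> A \<inter> C = {} \<and> B \<inter> C = {} \<longrightarrow>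
                   cond_indep M XS XA A B C \<longrightarrow> d_separated E A B C"
    and A2: "\<forall>t. cond_indep M XS XA (state_at dS (t - 1)) (state_at dS (t + 1))
                   (state_at dS t \<union> {Act t})"
    and A3: "\<forall>t i. i \<in> {1..dS} \<longrightarrow> (St t i, St (t + 1) i) \<in> E"
    and A4: "\<forall>t t' i j. t' \<le> t \<longrightarrow> (St t i, St t' j) \<notin> E"
    and A5: "\<forall>t j. j \<in> {1..dS} \<longrightarrow>
               cond_indep M XS XA {St (t + 1) j} (state_at dS (t + 1) - {St (t + 1) j})
                 (state_at dS t \<union> {Act t})"
  shows "\<forall>t i j. i \<in> {1..dS} \<and> j \<in> {1..dS} \<longrightarrow>
           (\<not> cond_indep M XS XA {St t i} {St (t + 1) j} ({Act t} \<union> (state_at dS t - {St t i}))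
              \<longrightarrow> (St t i, St (t + 1) j) \<in> E) \<and>
           (\<not> cond_indep M XS XA {Act t} {St (t + 1) j} (state_at dS t)
              \<longrightarrow> (Act t, St (t + 1) j) \<in> E)"
proof -
  have dsep2: "\<forall>t. d_separated E (state_at dS (t - 1)) (state_at dS (t + 1)) (state_at dS t \<union> {Act t})"
  proof
    fix t
    have "state_at dS (t - 1) \<subseteq> vars dS \<and> state_at dS (t + 1) \<subseteq> vars dS \<and>
      state_at dS t \<union> {Act t} \<subseteq> vars dS \<and>
      state_at dS (t - 1) \<inter> state_at dS (t + 1) = {} \<and>
      state_at dS (t - 1) \<inter> (state_at dS t \<union> {Act t}) = {} \<and>
      state_at dS (t + 1) \<inter> (state_at dS t \<union> {Act t}) = {}"
      by (auto simp: state_at_def vars_def)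
    then show "d_separated E (state_at dS (t - 1)) (state_at dS (t + 1)) (state_at dS t \<union> {Act t})"
      using faithful[rule_format, of "state_at dS (t - 1)" "state_at dS (t + 1)" "state_at dS t \<union> {Act t}"] A2 by blast
  qed
  interpret G E dS
    using graph act_no_parents A3 A4 dsep2 by unfold_locales
  show ?thesis
  proof (intro allI impI conjI)
    fix t i j assume ij: "i \<in> {1..dS} \<and> j \<in> {1..dS}"
    show "(St t i, St (t + 1) j) \<in> E" if nci: "\<not> cond_indep M XS XA {St t i} {St (t + 1) j} ({Act t} \<union> (state_at dS t - {St t i}))"
    proof (rule ccontr)
      assume ne: "(St t i, St (t + 1) j) \<notin> E"
      define C where "C = {Act t} \<union> (state_at dS t - {St t i})"
      have ds: "d_separated E {St t i} {St (t + 1) j} C"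
        unfolding d_separated_def
      proof (intro allI impI)
        fix p assume H: "is_path E p \<and> hd p \<in> {St t i} \<and> last p \<in> {St (t + 1) j}"
        have p0: "p ! 0 = St t i" proof -
          have "p \<noteq> []" using H by (auto simp: is_path_def)
          then show ?thesis using H hd_conv_nth[of p] by simp
        qed
        show "blocked E C p"
        proof (rule ccontr)
          assume nb: "\<not> blocked E C p"
          have "length p = 2 \<and> (p ! 0, St (t + 1) j) \<in> E"
          proof (rule main_core)
            show "is_path E p" using H by blast
            show "\<not> blocked E C p" by fact
            show "\<forall>c\<in>C. \<not> inL t c" by (auto simp: C_def inL_def state_at_mem)
            show "\<not> inL t (p ! 0)" using p0 by (simp add: inL_def)
            show "last p = St (t + 1) j" using H by simp
            show "Act t \<in> C \<or> p ! 0 = Act t" by (simp add: C_def)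
            show "St t m = p ! 0" if "m \<in> {1..dS}" "St t m \<notin> C" for m
              using that p0 by (auto simp: C_def state_at_mem)
          qed
          then show False using ne p0 by simp
        qed
      qed
      have "{St t i} \<subseteq> vars dS \<and> {St (t + 1) j} \<subseteq> vars dS \<and> C \<subseteq> vars dS \<and>
        {St t i} \<inter> {St (t + 1) j} = {} \<and> {St t i} \<inter> C = {} \<and> {St (t + 1) j} \<inter> C = {}"
        using ij by (auto simp: C_def state_at_def vars_def)
      then have "cond_indep M XS XA {St t i} {St (t + 1) j} C" using markov[rule_format, of "{St t i}" "{St (t + 1) j}" C] ds by blast
      then show False using nci C_def by simp
    qed
    show "(Act t, St (t + 1) j) \<in> E" if nci: "\<not> cond_indep M XS XA {Act t} {St (t + 1) j} (state_at dS t)"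
    proof (rule ccontr)
      assume ne: "(Act t, St (t + 1) j) \<notin> E"
      define C where "C = state_at dS t"
      have ds: "d_separated E {Act t} {St (t + 1) j} C"
        unfolding d_separated_def
      proof (intro allI impI)
        fix p assume H: "is_path E p \<and> hd p \<in> {Act t} \<and> last p \<in> {St (t + 1) j}"
        have p0: "p ! 0 = Act t" proof -
          have "p \<noteq> []" using H by (auto simp: is_path_def)
          then show ?thesis using H hd_conv_nth[of p] by simp
        qed
        show "blocked E C p"
        proof (rule ccontr)
          assume nb: "\<not> blocked E C p"
          have "length p = 2 \<and> (p ! 0, St (t + 1) j) \<in> E"
          proof (rule main_core)
            show "is_path E p" using H by blast
            show "\<not> blocked E C p" by fact
            show "\<forall>c\<in>C. \<not> inL t c" by (auto simp: C_def inL_def state_at_mem)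
            show "\<not> inL t (p ! 0)" using p0 by (simp add: inL_def)
            show "last p = St (t + 1) j" using H by simp
            show "Act t \<in> C \<or> p ! 0 = Act t" using p0 by simp
            show "St t m = p ! 0" if "m \<in> {1..dS}" "St t m \<notin> C" for m
              using that p0 by (auto simp: C_def state_at_mem)
          qed
          then show False using ne p0 by simp
        qed
      qed
      have "{Act t} \<subseteq> vars dS \<and> {St (t + 1) j} \<subseteq> vars dS \<and> C \<subseteq> vars dS \<and>
        {Act t} \<inter> {St (t + 1) j} = {} \<and> {Act t} \<inter> C = {} \<and> {St (t + 1) j} \<inter> C = {}"
        using ij by (auto simp: C_def state_at_def vars_def)
      then have "cond_indep M XS XA {Act t} {St (t + 1) j} C" using markov[rule_format, of "{Act t}" "{St (t + 1) j}" C] ds by blast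
      then show False using nci C_def by simp
    qed
  qed
qed

end
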